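(* Let $\mathbb{A}=(\mathbb{L},(\lozenge_i)_{i\in\mathsf{Ag}},(\Box_i)_{i\in\mathsf{Ag}})$ be an epistemic Heyting algebra and let $\mathbb{E}=(E,(\sim_i)_{i\in\mathsf{Ag}},(P_i)_{i\in\mathsf{Ag}},\Phi,\mathsf{pre})$ be a probabilistic event structure over $\mathbb{A}$. Then the intermediate algebra $\prod_{\mathbb{E}}\mathbb{A}$ is an epistemic Heyting algebra.
   Context: Fix a set $\mathsf{Ag}$ of agents. A monadic Heyting algebra is a Heyting algebra $\mathbb{L}$ with, for each $i\in\mathsf{Ag}$, monotone unary operations $\lozenge_i,\Box_i$ such that for all $a,b$: $a\leq\lozenge_i a$; $\Box_i a\leq a$; $\lozenge_i(a\vee b)\leq\lozenge_i a\vee\lozenge_i b$; $\Box_i(a\to b)\leq\Box_i a\to\Box_i b$; $\lozenge_i a\leq\Box_i\lozenge_i a$; $\lozenge_i\Box_i a\leq\Box_i a$; $\Box_i(a\to b)\leq\lozenge_i a\to\lozenge_i b$; $\lozenge_i\bot\leq\bot$; $\top\leq\Box_i\top$. An epistemic Heyting algebra is a finite monadic Heyting algebra with $\lozenge_i a\vee\neg\lozenge_i a=\top$ for all $i,a$. A pre-ordered multiset on a set $X$ is a multiset of elements of $X$ in which the $n$ copies $x_1,\dots,x_n$ of any element $x$ of multiplicity $n$ carry the linear order $x_1\prec\cdots\prec x_n$. A probabilistic event structure over $\mathbb{A}$ is a tuple $(E,(\sim_i),(P_i),\Phi,\mathsf{pre})$ where: $E$ is a non-empty finite set; each $\sim_i$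 is an equivalence relation on $E$; each $P_i:E\to\,]0,1]$ satisfies $\sum\{P_i(e')\mid e'\sim_i e\}=1$ for all $e$; $\Phi$ is a finite pre-ordered multiset on $\mathbb{A}$ such that any $a,b\in\Phi$ arising from distinct elements of $\mathbb{A}$ satisfy $a\wedge b=\bot$ or $a<b$ or $b<a$; $\mathsf{pre}$ assigns to each $a\in\Phi$ a probability distribution $\mathsf{pre}(\bullet\mid a)$ on $E$; and for all $a\in\Phi$, $e\in E$, if $\mathsf{pre}(e\mid a)=0$ then $\mathsf{pre}(e\mid b)=0$ for all $b\in\Phi$ with $a<b$ (if $a,b$ arise from distinct elements) or $a\prec b$ (if they are copies of the same element). The intermediate algebra $\prod_{\mathbb{E}}\mathbb{A}=(\prod_{|E|}\mathbb{L},(\lozenge'_i),(\Box'_i))$ has as carrier the set of all maps $f:E\to\mathbb{A}$ with the pointwise Heyting algebra operations, and $(\lozenge'_i f)(e)=\bigvee\{\lozenge_i f(e')\mid e'\sim_i e\}$, $(\Box'_i f)(e)=\bigwedge\{\Box_i f(e')\mid e'\sim_i e\}$. *)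

theory Defs
  imports Complex_Main "HOL-Library.Multiset" "HOL-Library.FuncSet"
begin

record ('i, 'a) mha =
  carr :: "'a set"
  mt   :: "'a \<Rightarrow> 'a \<Rightarrow> 'a"
  jn   :: "'a \<Rightarrow> 'a \<Rightarrow> 'a"
  im   :: "'a \<Rightarrow> 'a \<Rightarrow> 'a"
  bt   :: "'a"
  tp   :: "'a"
  dia  :: "'i \<Rightarrow> 'a \<Rightarrow> 'a"
  box  :: "'i \<Rightarrow> 'a \<Rightarrow> 'a"

definition hle :: "('i, 'a) mha \<Rightarrow> 'a \<Rightarrow> 'a \<Rightarrow> bool" where
  "hle A a b \<longleftrightarrow> mt A a b = a"

definition hlt :: "('i, 'a) mha \<Rightarrow> 'a \<Rightarrow> 'a \<Rightarrow> bool" where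
  "hlt A a b \<longleftrightarrow> hle A a b \<and> a \<noteq> b"

definition hneg :: "('i, 'a) mha \<Rightarrow> 'a \<Rightarrow> 'a" where
  "hneg A a = im A a (bt A)"

definition hlub :: "('i, 'a) mha \<Rightarrow> 'a set \<Rightarrow> 'a" where
  "hlub A S = (THE x. x \<in> carr A \<and> (\<forall>y\<in>S. hle A y x) \<and>
                 (\<forall>z\<in>carr A. (\<forall>y\<in>S. hle A y z) \<longrightarrow> hle A x z))"

definition hglb :: "('i, 'a) mha \<Rightarrow> 'a set \<Rightarrow> 'a" where
  "hglb A S = (THE x. x \<in> carr A \<and> (\<forall>y\<in>S. hle A x y) \<and>
                 (\<forall>z\<in>carr A. (\<forall>y\<in>S. hle A z y) \<longrightarrow> hle A z x))"

definition heyting_algebra :: "('i, 'a) mha \<Rightarrow> bool" where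
  "heyting_algebra A \<longleftrightarrow>
     bt A \<in> carr A \<and> tp A \<in> carr A \<and>
     (\<forall>a\<in>carr A. \<forall>b\<in>carr A.
        mt A a b \<in> carr A \<and> jn A a b \<in> carr A \<and> im A a b \<in> carr A) \<and>
     (\<forall>a\<in>carr A. \<forall>b\<in>carr A.
        mt A a b = mt A b a \<and> jn A a b = jn A b a \<and>
        mt A a (jn A a b) = a \<and> jn A a (mt A a b) = a) \<and>
     (\<forall>a\<in>carr A. \<forall>b\<in>carr A. \<forall>c\<in>carr A.
        mt A (mt A a b) c = mt A a (mt A b c) \<and>
        jn A (jn A a b) c = jn A a (jn A b c)) \<and>
     (\<forall>a\<in>carr A. hle A (bt A) a \<and> hle A a (tp A)) \<and>
     (\<forall>a\<in>carr A. \<forall>b\<in>carr A. \<forall>c\<in>carr A.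
        hle A (mt A a b) c \<longleftrightarrow> hle A a (im A b c))"

definition monadic_ha :: "'i set \<Rightarrow> ('i, 'a) mha \<Rightarrow> bool" where
  "monadic_ha Ag A \<longleftrightarrow> heyting_algebra A \<and>
     (\<forall>i\<in>Ag.
       (\<forall>a\<in>carr A. dia A i a \<in> carr A \<and> box A i a \<in> carr A) \<and>
       (\<forall>a\<in>carr A. \<forall>b\<in>carr A. hle A a b \<longrightarrow>
            hle A (dia A i a) (dia A i b) \<and> hle A (box A i a) (box A i b)) \<and>
       (\<forall>a\<in>carr A. \<forall>b\<in>carr A.
          hle A a (dia A i a) \<and>
          hle A (box A i a) a \<and>
          hle A (dia A i (jn A a b)) (jn A (dia A i a) (dia A i b)) \<and>
          hle A (box A i (im A a b)) (im A (box A i a) (box A i b)) \<and>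
          hle A (dia A i a) (box A i (dia A i a)) \<and>
          hle A (dia A i (box A i a)) (box A i a) \<and>
          hle A (box A i (im A a b)) (im A (dia A i a) (dia A i b))) \<and>
       hle A (dia A i (bt A)) (bt A) \<and>
       hle A (tp A) (box A i (tp A)))"

definition epistemic_ha :: "'i set \<Rightarrow> ('i, 'a) mha \<Rightarrow> bool" where
  "epistemic_ha Ag A \<longleftrightarrow> monadic_ha Ag A \<and> finite (carr A) \<and>
     (\<forall>i\<in>Ag. \<forall>a\<in>carr A. jn A (dia A i a) (hneg A (dia A i a)) = tp A)"

text \<open>A pre-ordered multiset: the copies of an element a of
  multiplicity n are "(a,0) \<prec> \<dots> \<prec> (a,n-1)".\<close>
definition copies :: "'a multiset \<Rightarrow> ('a \<times> nat) set" where
  "copies Phi = {(a, k). k < count Phi a}"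

definition prob_event_structure ::
  "'i set \<Rightarrow> ('i, 'a) mha \<Rightarrow> 'e set \<Rightarrow> ('i \<Rightarrow> 'e \<Rightarrow> 'e \<Rightarrow> bool) \<Rightarrow>
   ('i \<Rightarrow> 'e \<Rightarrow> real) \<Rightarrow> 'a multiset \<Rightarrow> ('a \<times> nat \<Rightarrow> 'e \<Rightarrow> real) \<Rightarrow> bool" where
  "prob_event_structure Ag A E sim P Phi pre \<longleftrightarrow>
     E \<noteq> {} \<and> finite E \<and>
     (\<forall>i\<in>Ag. equiv E {(x, y). x \<in> E \<and> y \<in> E \<and> sim i x y}) \<and>
     (\<forall>i\<in>Ag. \<forall>e\<in>E. 0 < P i e \<and> P i e \<le> 1) \<and>
     (\<forall>i\<in>Ag. \<forall>e\<in>E. (\<Sum>e'\<in>{e'\<in>E. sim i e' e}. P i e') = 1) \<and>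
     set_mset Phi \<subseteq> carr A \<and>
     (\<forall>a\<in>set_mset Phi. \<forall>b\<in>set_mset Phi. a \<noteq> b \<longrightarrow>
         mt A a b = bt A \<or> hlt A a b \<or> hlt A b a) \<and>
     (\<forall>c\<in>copies Phi. (\<forall>e\<in>E. 0 \<le> pre c e) \<and> (\<Sum>e\<in>E. pre c e) = 1) \<and>
     (\<forall>(a, k)\<in>copies Phi. \<forall>(b, l)\<in>copies Phi. \<forall>e\<in>E.
         pre (a, k) e = 0 \<longrightarrow>
         ((a \<noteq> b \<and> hlt A a b) \<or> (a = b \<and> k < l)) \<longrightarrow> pre (b, l) e = 0)"

definition intermediate ::
  "('i, 'a) mha \<Rightarrow> 'e set \<Rightarrow> ('i \<Rightarrow> 'e \<Rightarrow> 'e \<Rightarrow> bool) \<Rightarrow> ('i, 'e \<Rightarrow> 'a) mha" where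
  "intermediate A E sim =
     \<lparr> carr = E \<rightarrow>\<^sub>E carr A,
       mt = (\<lambda>f g. restrict (\<lambda>e. mt A (f e) (g e)) E),
       jn = (\<lambda>f g. restrict (\<lambda>e. jn A (f e) (g e)) E),
       im = (\<lambda>f g. restrict (\<lambda>e. im A (f e) (g e)) E),
       bt = restrict (\<lambda>e. bt A) E,
       tp = restrict (\<lambda>e. tp A) E,
       dia = (\<lambda>i f. restrict (\<lambda>e. hlub A {dia A i (f e') |e'. e' \<in> E \<and> sim i e' e}) E),
       box = (\<lambda>i f. restrict (\<lambda>e. hglb A {box A i (f e') |e'. e' \<in> E \<and> sim i e' e}) E) \<rparr>"

end

theory Submission
  imports Defs
begin


locale HA =
  fixes A :: "('i,'a) mha"
  assumes ha: "heyting_algebra A"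
begin

abbreviation "C \<equiv> carr A"
abbreviation le (infix "\<sqsubseteq>" 50) where "le a b \<equiv> hle A a b"

lemma bt_c[simp]: "bt A \<in> C" and tp_c[simp]: "tp A \<in> C"
  using ha unfolding heyting_algebra_def by auto
lemma mt_c[simp]: "a \<in> C \<Longrightarrow> b \<in> C \<Longrightarrow> mt A a b \<in> C"
  and jn_c[simp]: "a \<in> C \<Longrightarrow> b \<in> C \<Longrightarrow> jn A a b \<in> C"
  and im_c[simp]: "a \<in> C \<Longrightarrow> b \<in> C \<Longrightarrow> im A a b \<in> C"
  using ha unfolding heyting_algebra_def by auto
lemma mt_comm: "a \<in> C \<Longrightarrow> b \<in> C \<Longrightarrow> mt A a b = mt A b a"
  and jn_comm: "a \<in> C \<Longrightarrow> b \<in> C \<Longrightarrow> jn A a b = jn A b a"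
  and abs1: "a \<in> C \<Longrightarrow> b \<in> C \<Longrightarrow> mt A a (jn A a b) = a"
  and abs2: "a \<in> C \<Longrightarrow> b \<in> C \<Longrightarrow> jn A a (mt A a b) = a"
  using ha unfolding heyting_algebra_def by auto
lemma mt_assoc: "a \<in> C \<Longrightarrow> b \<in> C \<Longrightarrow> c \<in> C \<Longrightarrow> mt A (mt A a b) c = mt A a (mt A b c)"
  and jn_assoc: "a \<in> C \<Longrightarrow> b \<in> C \<Longrightarrow> c \<in> C \<Longrightarrow> jn A (jn A a b) c = jn A a (jn A b c)"
  using ha unfolding heyting_algebra_def by auto
lemma bt_le: "a \<in> C \<Longrightarrow> bt A \<sqsubseteq> a" and le_tp: "a \<in> C \<Longrightarrow> a \<sqsubseteq> tp A"
  using ha unfolding heyting_algebra_def by auto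
lemma resid: "a \<in> C \<Longrightarrow> b \<in> C \<Longrightarrow> c \<in> C \<Longrightarrow> mt A a b \<sqsubseteq> c \<longleftrightarrow> a \<sqsubseteq> im A b c"
  using ha unfolding heyting_algebra_def by auto

lemma mt_idem: "a \<in> C \<Longrightarrow> mt A a a = a"
  by (metis abs1 abs2 mt_c)
lemma jn_idem: "a \<in> C \<Longrightarrow> jn A a a = a"
  by (metis abs1 abs2 jn_c)
lemma le_refl: "a \<in> C \<Longrightarrow> a \<sqsubseteq> a" by (simp add: hle_def mt_idem)
lemma le_antisym: "a \<in> C \<Longrightarrow> b \<in> C \<Longrightarrow> a \<sqsubseteq> b \<Longrightarrow> b \<sqsubseteq> a \<Longrightarrow> a = b"
  by (metis hle_def mt_comm)
lemma le_trans: "a \<in> C \<Longrightarrow> b \<in> C \<Longrightarrow> c \<in> C \<Longrightarrow> a \<sqsubseteq> b \<Longrightarrow> b \<sqsubseteq> c \<Longrightarrow> a \<sqsubseteq> c"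
  by (metis hle_def mt_assoc)
lemma mt_le1: "a \<in> C \<Longrightarrow> b \<in> C \<Longrightarrow> mt A a b \<sqsubseteq> a"
  unfolding hle_def by (metis mt_assoc mt_comm mt_idem)
lemma mt_le2: "a \<in> C \<Longrightarrow> b \<in> C \<Longrightarrow> mt A a b \<sqsubseteq> b"
  by (metis mt_comm mt_le1)
lemma mt_glb: "a \<in> C \<Longrightarrow> b \<in> C \<Longrightarrow> c \<in> C \<Longrightarrow> c \<sqsubseteq> a \<Longrightarrow> c \<sqsubseteq> b \<Longrightarrow> c \<sqsubseteq> mt A a b"
  unfolding hle_def by (metis mt_assoc)
lemma jn_ge1: "a \<in> C \<Longrightarrow> b \<in> C \<Longrightarrow> a \<sqsubseteq> jn A a b"
  unfolding hle_def by (simp add: abs1)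
lemma jn_ge2: "a \<in> C \<Longrightarrow> b \<in> C \<Longrightarrow> b \<sqsubseteq> jn A a b"
  by (metis jn_comm jn_ge1)
lemma le_jn: "a \<in> C \<Longrightarrow> b \<in> C \<Longrightarrow> a \<sqsubseteq> b \<Longrightarrow> jn A a b = b"
  unfolding hle_def by (metis abs2 jn_comm mt_comm)
lemma jn_lub: "a \<in> C \<Longrightarrow> b \<in> C \<Longrightarrow> c \<in> C \<Longrightarrow> a \<sqsubseteq> c \<Longrightarrow> b \<sqsubseteq> c \<Longrightarrow> jn A a b \<sqsubseteq> c"
proof -
  assume h: "a \<in> C" "b \<in> C" "c \<in> C" "a \<sqsubseteq> c" "b \<sqsubseteq> c"
  have "jn A (jn A a b) c = c" using h by (simp add: jn_assoc le_jn)
  thus ?thesis using h unfolding hle_def by (metis abs1 jn_c)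
qed
lemma mp: "a \<in> C \<Longrightarrow> b \<in> C \<Longrightarrow> mt A (im A a b) a \<sqsubseteq> b"
  using resid[of "im A a b" a b] le_refl by simp
lemma mt_mono: "a \<in> C \<Longrightarrow> b \<in> C \<Longrightarrow> a' \<in> C \<Longrightarrow> b' \<in> C \<Longrightarrow> a \<sqsubseteq> a' \<Longrightarrow> b \<sqsubseteq> b' \<Longrightarrow> mt A a b \<sqsubseteq> mt A a' b'"
  by (meson le_trans mt_c mt_glb mt_le1 mt_le2)
lemma jn_mono: "a \<in> C \<Longrightarrow> b \<in> C \<Longrightarrow> a' \<in> C \<Longrightarrow> b' \<in> C \<Longrightarrow> a \<sqsubseteq> a' \<Longrightarrow> b \<sqsubseteq> b' \<Longrightarrow> jn A a b \<sqsubseteq> jn A a' b'"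
  by (meson le_trans jn_c jn_lub jn_ge1 jn_ge2)

definition islub where "islub S x \<longleftrightarrow> x \<in> C \<and> (\<forall>y\<in>S. y \<sqsubseteq> x) \<and> (\<forall>z\<in>C. (\<forall>y\<in>S. y \<sqsubseteq> z) \<longrightarrow> x \<sqsubseteq> z)"
definition isglb where "isglb S x \<longleftrightarrow> x \<in> C \<and> (\<forall>y\<in>S. x \<sqsubseteq> y) \<and> (\<forall>z\<in>C. (\<forall>y\<in>S. z \<sqsubseteq> y) \<longrightarrow> z \<sqsubseteq> x)"

lemma hlub_eq: "islub S x \<Longrightarrow> hlub A S = x"
  unfolding hlub_def islub_def[symmetric]
  by (rule the_equality) (auto simp: islub_def intro: le_antisym)
lemma hglb_eq: "isglb S x \<Longrightarrow> hglb A S = x"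
  unfolding hglb_def isglb_def[symmetric]
  by (rule the_equality) (auto simp: isglb_def intro: le_antisym)

lemma islub_ex: "finite S \<Longrightarrow> S \<noteq> {} \<Longrightarrow> S \<subseteq> C \<Longrightarrow> islub S (hlub A S)"
proof (induction S rule: finite_ne_induct)
  case (singleton x) then have "islub {x} x" by (auto simp: islub_def le_refl)
  then show ?case by (simp add: hlub_eq)
next
  case (insert x F)
  then have h: "islub F (hlub A F)" "x \<in> C" "F \<subseteq> C" by auto
  then have "islub (insert x F) (jn A x (hlub A F))"
    unfolding islub_def by (auto intro: jn_ge1 jn_lub) (meson h(3) subsetD jn_c jn_ge2 le_trans)
  then show ?case by (simp add: hlub_eq)
qed

lemma isglb_ex: "finite S \<Longrightarrow> S \<noteq> {} \<Longrightarrow> S \<subseteq> C \<Longrightarrow> isglb S (hglb A S)"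
proof (induction S rule: finite_ne_induct)
  case (singleton x) then have "isglb {x} x" by (auto simp: isglb_def le_refl)
  then show ?case by (simp add: hglb_eq)
next
  case (insert x F)
  then have h: "isglb F (hglb A F)" "x \<in> C" "F \<subseteq> C" by auto
  then have "isglb (insert x F) (mt A x (hglb A F))"
    unfolding isglb_def by (auto intro: mt_le1 mt_glb) (meson h(3) subsetD mt_c mt_le2 le_trans)
  then show ?case by (simp add: hglb_eq)
qed

lemma hlub_insert: "finite S \<Longrightarrow> S \<noteq> {} \<Longrightarrow> S \<subseteq> C \<Longrightarrow> x \<in> C \<Longrightarrow> hlub A (insert x S) = jn A x (hlub A S)"
proof -
  assume a: "finite S" "S \<noteq> {}" "S \<subseteq> C" "x \<in> C"
  then have h: "islub S (hlub A S)" by (intro islub_ex)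
  then have "islub (insert x S) (jn A x (hlub A S))"
    using a unfolding islub_def by (auto intro: jn_ge1 jn_lub) (meson a(3) subsetD jn_c jn_ge2 le_trans)
  then show ?thesis by (simp add: hlub_eq)
qed
lemma hglb_insert: "finite S \<Longrightarrow> S \<noteq> {} \<Longrightarrow> S \<subseteq> C \<Longrightarrow> x \<in> C \<Longrightarrow> hglb A (insert x S) = mt A x (hglb A S)"
proof -
  assume a: "finite S" "S \<noteq> {}" "S \<subseteq> C" "x \<in> C"
  then have h: "isglb S (hglb A S)" by (intro isglb_ex)
  then have "isglb (insert x S) (mt A x (hglb A S))"
    using a unfolding isglb_def by (auto intro: mt_le1 mt_glb) (meson a(3) subsetD mt_c mt_le2 le_trans)
  then show ?thesis by (simp add: hglb_eq)
qed

lemma hlub_single: "x \<in> C \<Longrightarrow> hlub A {x} = x"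
  by (rule hlub_eq) (auto simp: islub_def le_refl)
lemma hglb_single: "x \<in> C \<Longrightarrow> hglb A {x} = x"
  by (rule hglb_eq) (auto simp: isglb_def le_refl)

end


locale MHA = HA A for A :: "('i,'a) mha" +
  fixes Ag :: "'i set"
  assumes mha: "monadic_ha Ag A"
begin

context fixes i assumes i: "i \<in> Ag"
begin
lemma dia_c[simp]: "a \<in> C \<Longrightarrow> dia A i a \<in> C" and box_c[simp]: "a \<in> C \<Longrightarrow> box A i a \<in> C"
  using mha i unfolding monadic_ha_def by auto
lemma dia_mono: "a \<in> C \<Longrightarrow> b \<in> C \<Longrightarrow> a \<sqsubseteq> b \<Longrightarrow> dia A i a \<sqsubseteq> dia A i b"
  and box_mono: "a \<in> C \<Longrightarrow> b \<in> C \<Longrightarrow> a \<sqsubseteq> b \<Longrightarrow> box A i a \<sqsubseteq> box A i b"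
  using mha i unfolding monadic_ha_def by auto
lemma ax: "a \<in> C \<Longrightarrow> b \<in> C \<Longrightarrow>
          a \<sqsubseteq> (dia A i a) \<and>
          (box A i a) \<sqsubseteq> a \<and>
          (dia A i (jn A a b)) \<sqsubseteq> (jn A (dia A i a) (dia A i b)) \<and>
          (box A i (im A a b)) \<sqsubseteq> (im A (box A i a) (box A i b)) \<and>
          (dia A i a) \<sqsubseteq> (box A i (dia A i a)) \<and>
          (dia A i (box A i a)) \<sqsubseteq> (box A i a) \<and>
          (box A i (im A a b)) \<sqsubseteq> (im A (dia A i a) (dia A i b))"
  using mha i unfolding monadic_ha_def by blast
lemma ax_bt: "dia A i (bt A) \<sqsubseteq> bt A" and ax_tp: "tp A \<sqsubseteq> box A i (tp A)"
  using mha i unfolding monadic_ha_def by auto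

lemma dia_jn: "a \<in> C \<Longrightarrow> b \<in> C \<Longrightarrow> dia A i (jn A a b) = jn A (dia A i a) (dia A i b)"
proof -
  assume a: "a \<in> C" "b \<in> C"
  have 1: "dia A i a \<sqsubseteq> dia A i (jn A a b)" using a by (intro dia_mono) (simp_all add: jn_ge1)
  have 2: "dia A i b \<sqsubseteq> dia A i (jn A a b)" using a by (intro dia_mono) (simp_all add: jn_ge2)
  show ?thesis using a 1 2 ax by (intro le_antisym jn_lub) auto
qed

lemma box_mt: "a \<in> C \<Longrightarrow> b \<in> C \<Longrightarrow> box A i (mt A a b) = mt A (box A i a) (box A i b)"
proof (rule le_antisym)
  assume a: "a \<in> C" "b \<in> C"
  show "box A i (mt A a b) \<sqsubseteq> mt A (box A i a) (box A i b)"
  proof -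
    have 1: "box A i (mt A a b) \<sqsubseteq> box A i a" using a by (intro box_mono) (simp_all add: mt_le1)
    have 2: "box A i (mt A a b) \<sqsubseteq> box A i b" using a by (intro box_mono) (simp_all add: mt_le2)
    show ?thesis using a 1 2 by (intro mt_glb) auto
  qed
  have "a \<sqsubseteq> im A b (mt A a b)" using a resid[of a b "mt A a b"] le_refl by simp
  then have 1: "box A i a \<sqsubseteq> box A i (im A b (mt A a b))" using a by (simp add: box_mono)
  have 2: "box A i (im A b (mt A a b)) \<sqsubseteq> im A (box A i b) (box A i (mt A a b))"
    using a ax by simp
  from 1 2 have "box A i a \<sqsubseteq> im A (box A i b) (box A i (mt A a b))"
    using a by (meson box_c im_c le_trans mt_c)
  then show "mt A (box A i a) (box A i b) \<sqsubseteq> box A i (mt A a b)"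
    using a resid by simp
qed (auto)

lemma dia_hlub: "finite S \<Longrightarrow> S \<noteq> {} \<Longrightarrow> S \<subseteq> C \<Longrightarrow> hlub A (dia A i ` S) = dia A i (hlub A S)"
proof (induction S rule: finite_ne_induct)
  case (singleton x) then show ?case by (simp add: hlub_single)
next
  case (insert x F)
  have c: "hlub A F \<in> C" using insert islub_ex islub_def by auto
  have "hlub A (dia A i ` insert x F) = jn A (dia A i x) (hlub A (dia A i ` F))"
    unfolding image_insert by (rule hlub_insert) (use insert in auto)
  also have "\<dots> = dia A i (jn A x (hlub A F))" using insert c by (simp add: dia_jn)
  also have "\<dots> = dia A i (hlub A (insert x F))" using insert by (simp add: hlub_insert)
  finally show ?case .
qed

lemma box_hglb: "finite S \<Longrightarrow> S \<noteq> {} \<Longrightarrow> S \<subseteq> C \<Longrightarrow> hglb A (box A i ` S) = box A i (hglb A S)"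
proof (induction S rule: finite_ne_induct)
  case (singleton x) then show ?case by (simp add: hglb_single)
next
  case (insert x F)
  have c: "hglb A F \<in> C" using insert isglb_ex isglb_def by auto
  have "hglb A (box A i ` insert x F) = mt A (box A i x) (hglb A (box A i ` F))"
    unfolding image_insert by (rule hglb_insert) (use insert in auto)
  also have "\<dots> = box A i (mt A x (hglb A F))" using insert c by (simp add: box_mt)
  also have "\<dots> = box A i (hglb A (insert x F))" using insert by (simp add: hglb_insert)
  finally show ?case .
qed
end
end

lemma I_simps:
  "carr (intermediate A E sim) = E \<rightarrow>\<^sub>E carr A"
  "mt (intermediate A E sim) = (\<lambda>f g. restrict (\<lambda>e. mt A (f e) (g e)) E)"
  "jn (intermediate A E sim) = (\<lambda>f g. restrict (\<lambda>e. jn A (f e) (g e)) E)"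
  "im (intermediate A E sim) = (\<lambda>f g. restrict (\<lambda>e. im A (f e) (g e)) E)"
  "bt (intermediate A E sim) = restrict (\<lambda>e. bt A) E"
  "tp (intermediate A E sim) = restrict (\<lambda>e. tp A) E"
  "dia (intermediate A E sim) = (\<lambda>i f. restrict (\<lambda>e. hlub A {dia A i (f e') |e'. e' \<in> E \<and> sim i e' e}) E)"
  "box (intermediate A E sim) = (\<lambda>i f. restrict (\<lambda>e. hglb A {box A i (f e') |e'. e' \<in> E \<and> sim i e' e}) E)"
  by (simp_all add: intermediate_def)

lemma restrict_eq_PiE: "f \<in> E \<rightarrow>\<^sub>E B \<Longrightarrow> restrict h E = f \<longleftrightarrow> (\<forall>x\<in>E. h x = f x)"
proof
  assume "restrict h E = f" then show "\<forall>x\<in>E. h x = f x" by auto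
next
  assume f: "f \<in> E \<rightarrow>\<^sub>E B" and h: "\<forall>x\<in>E. h x = f x"
  show "restrict h E = f"
  proof
    fix x show "restrict h E x = f x"
      using PiE_arb[OF f, of x] h by (cases "x \<in> E") simp_all
  qed
qed


context HA begin

lemma hleI: "f \<in> E \<rightarrow>\<^sub>E C \<Longrightarrow> g \<in> E \<rightarrow>\<^sub>E C \<Longrightarrow>
   hle (intermediate A E sim) f g \<longleftrightarrow> (\<forall>e\<in>E. f e \<sqsubseteq> g e)"
  unfolding hle_def I_simps by (simp add: restrict_eq_PiE)

lemma I_closed:
  "a \<in> E \<rightarrow>\<^sub>E C \<Longrightarrow> b \<in> E \<rightarrow>\<^sub>E C \<Longrightarrow> mt (intermediate A E sim) a b \<in> E \<rightarrow>\<^sub>E C"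
  "a \<in> E \<rightarrow>\<^sub>E C \<Longrightarrow> b \<in> E \<rightarrow>\<^sub>E C \<Longrightarrow> jn (intermediate A E sim) a b \<in> E \<rightarrow>\<^sub>E C"
  "a \<in> E \<rightarrow>\<^sub>E C \<Longrightarrow> b \<in> E \<rightarrow>\<^sub>E C \<Longrightarrow> im (intermediate A E sim) a b \<in> E \<rightarrow>\<^sub>E C"
  "bt (intermediate A E sim) \<in> E \<rightarrow>\<^sub>E C" "tp (intermediate A E sim) \<in> E \<rightarrow>\<^sub>E C"
  using PiE_mem by (simp_all add: I_simps) (blast intro: mt_c jn_c im_c)+

lemma heyting_I: "heyting_algebra (intermediate A E sim)"
proof -
  let ?I = "intermediate A E sim"
  have m: "\<And>f e. f \<in> E \<rightarrow>\<^sub>E C \<Longrightarrow> e \<in> E \<Longrightarrow> f e \<in> C" by (rule PiE_mem)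
  show ?thesis
    unfolding heyting_algebra_def I_simps(1)
  proof (intro conjI ballI)
    show "bt ?I \<in> E \<rightarrow>\<^sub>E C" "tp ?I \<in> E \<rightarrow>\<^sub>E C" by (rule I_closed)+
  next
    fix a b assume a: "a \<in> E \<rightarrow>\<^sub>E C" "b \<in> E \<rightarrow>\<^sub>E C"
    show "mt ?I a b \<in> E \<rightarrow>\<^sub>E C" "jn ?I a b \<in> E \<rightarrow>\<^sub>E C" "im ?I a b \<in> E \<rightarrow>\<^sub>E C"
      using a by (rule I_closed)+
    show "mt ?I a b = mt ?I b a" "jn ?I a b = jn ?I b a"
      unfolding I_simps by (rule restrict_ext; simp add: m a mt_comm jn_comm)+
    show "mt ?I a (jn ?I a b) = a" "jn ?I a (mt ?I a b) = a"
      unfolding I_simps using a by (simp_all add: restrict_eq_PiE m abs1 abs2)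
  next
    fix a b c assume a: "a \<in> E \<rightarrow>\<^sub>E C" "b \<in> E \<rightarrow>\<^sub>E C" "c \<in> E \<rightarrow>\<^sub>E C"
    show "mt ?I (mt ?I a b) c = mt ?I a (mt ?I b c)" "jn ?I (jn ?I a b) c = jn ?I a (jn ?I b c)"
      unfolding I_simps by (rule restrict_ext; simp add: m a mt_assoc jn_assoc)+
    have mc: "mt ?I a b \<in> E \<rightarrow>\<^sub>E C" "im ?I b c \<in> E \<rightarrow>\<^sub>E C" using a by (simp_all add: I_closed)
    show "hle ?I (mt ?I a b) c \<longleftrightarrow> hle ?I a (im ?I b c)"
      using a mc by (simp add: hleI) (simp add: I_simps resid m)
  next
    fix a assume a: "a \<in> E \<rightarrow>\<^sub>E C"
    show "hle ?I (bt ?I) a"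
      using a by (simp add: hleI I_closed) (simp add: I_simps bt_le m)
    show "hle ?I a (tp ?I)"
      using a by (simp add: hleI I_closed) (simp add: I_simps le_tp m)
  qed
qed

end

locale MHAE = MHA A Ag for A :: "('i,'a) mha" and Ag +
  fixes E :: "'e set" and sim :: "'i \<Rightarrow> 'e \<Rightarrow> 'e \<Rightarrow> bool"
  assumes fE: "finite E"
    and eqv: "\<forall>i\<in>Ag. equiv E {(x, y). x \<in> E \<and> y \<in> E \<and> sim i x y}"
begin

definition cls where "cls i e = {e'\<in>E. sim i e' e}"

context fixes i assumes i: "i \<in> Ag" begin

lemma eqv_i: "equiv E {(x, y). x \<in> E \<and> y \<in> E \<and> sim i x y}" using eqv i by blast
lemma sim_refl: "e \<in> E \<Longrightarrow> sim i e e"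
  using eqv_i unfolding equiv_def refl_on_def by blast
lemma sim_sym: "x \<in> E \<Longrightarrow> y \<in> E \<Longrightarrow> sim i x y \<Longrightarrow> sim i y x"
  using eqv_i unfolding equiv_def sym_def by blast
lemma sim_trans: "x \<in> E \<Longrightarrow> y \<in> E \<Longrightarrow> z \<in> E \<Longrightarrow> sim i x y \<Longrightarrow> sim i y z \<Longrightarrow> sim i x z"
  using eqv_i unfolding equiv_def trans_def by blast

lemma cls_fin: "finite (cls i e)" using fE by (simp add: cls_def)
lemma cls_self: "e \<in> E \<Longrightarrow> e \<in> cls i e" by (simp add: cls_def sim_refl)
lemma cls_sub: "cls i e \<subseteq> E" by (auto simp: cls_def)
lemma cls_same: "e \<in> E \<Longrightarrow> e' \<in> cls i e \<Longrightarrow> cls i e' = cls i e"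
  unfolding cls_def by (auto intro: sim_trans sim_sym)

lemma img_sub: "f \<in> E \<rightarrow>\<^sub>E C \<Longrightarrow> f ` cls i e \<subseteq> C"
  using cls_sub PiE_mem by blast
lemma img_fin: "finite (f ` cls i e)" by (simp add: cls_fin)
lemma img_ne: "e \<in> E \<Longrightarrow> f ` cls i e \<noteq> {}" using cls_self by blast

lemma J_lub: "f \<in> E \<rightarrow>\<^sub>E C \<Longrightarrow> e \<in> E \<Longrightarrow> islub (f ` cls i e) (hlub A (f ` cls i e))"
  by (rule islub_ex[OF img_fin img_ne img_sub])
lemma M_glb: "f \<in> E \<rightarrow>\<^sub>E C \<Longrightarrow> e \<in> E \<Longrightarrow> isglb (f ` cls i e) (hglb A (f ` cls i e))"
  by (rule isglb_ex[OF img_fin img_ne img_sub])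

lemma J_c: "f \<in> E \<rightarrow>\<^sub>E C \<Longrightarrow> e \<in> E \<Longrightarrow> hlub A (f ` cls i e) \<in> C"
  using J_lub islub_def by blast
lemma J_ub: "f \<in> E \<rightarrow>\<^sub>E C \<Longrightarrow> e \<in> E \<Longrightarrow> e' \<in> cls i e \<Longrightarrow> f e' \<sqsubseteq> hlub A (f ` cls i e)"
  using J_lub islub_def by blast
lemma J_least: "f \<in> E \<rightarrow>\<^sub>E C \<Longrightarrow> e \<in> E \<Longrightarrow> z \<in> C \<Longrightarrow> (\<And>e'. e' \<in> cls i e \<Longrightarrow> f e' \<sqsubseteq> z) \<Longrightarrow> hlub A (f ` cls i e) \<sqsubseteq> z"
  using J_lub[of f e] unfolding islub_def by blast
lemma M_c: "f \<in> E \<rightarrow>\<^sub>E C \<Longrightarrow> e \<in> E \<Longrightarrow> hglb A (f ` cls i e) \<in> C"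
  using M_glb isglb_def by blast
lemma M_lb: "f \<in> E \<rightarrow>\<^sub>E C \<Longrightarrow> e \<in> E \<Longrightarrow> e' \<in> cls i e \<Longrightarrow> hglb A (f ` cls i e) \<sqsubseteq> f e'"
  using M_glb isglb_def by blast
lemma M_greatest: "f \<in> E \<rightarrow>\<^sub>E C \<Longrightarrow> e \<in> E \<Longrightarrow> z \<in> C \<Longrightarrow> (\<And>e'. e' \<in> cls i e \<Longrightarrow> z \<sqsubseteq> f e') \<Longrightarrow> z \<sqsubseteq> hglb A (f ` cls i e)"
  using M_glb[of f e] unfolding isglb_def by blast

lemma diaI: "f \<in> E \<rightarrow>\<^sub>E C \<Longrightarrow> dia (intermediate A E sim) i f = restrict (\<lambda>e. dia A i (hlub A (f ` cls i e))) E"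
  unfolding I_simps
proof (rule restrict_ext)
  fix e assume f: "f \<in> E \<rightarrow>\<^sub>E C" and e: "e \<in> E"
  have "{dia A i (f e') |e'. e' \<in> E \<and> sim i e' e} = dia A i ` (f ` cls i e)"
    by (auto simp: cls_def)
  then show "hlub A {dia A i (f e') |e'. e' \<in> E \<and> sim i e' e} = dia A i (hlub A (f ` cls i e))"
    using dia_hlub[OF i img_fin img_ne[OF e] img_sub[OF f]] by simp
qed

lemma boxI: "f \<in> E \<rightarrow>\<^sub>E C \<Longrightarrow> box (intermediate A E sim) i f = restrict (\<lambda>e. box A i (hglb A (f ` cls i e))) E"
  unfolding I_simps
proof (rule restrict_ext)
  fix e assume f: "f \<in> E \<rightarrow>\<^sub>E C" and e: "e \<in> E"
  have "{box A i (f e') |e'. e' \<in> E \<and> sim i e' e} = box A i ` (f ` cls i e)"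
    by (auto simp: cls_def)
  then show "hglb A {box A i (f e') |e'. e' \<in> E \<and> sim i e' e} = box A i (hglb A (f ` cls i e))"
    using box_hglb[OF i img_fin img_ne[OF e] img_sub[OF f]] by simp
qed

lemma diaI_c: "f \<in> E \<rightarrow>\<^sub>E C \<Longrightarrow> dia (intermediate A E sim) i f \<in> E \<rightarrow>\<^sub>E C"
  by (simp add: diaI J_c i)
lemma boxI_c: "f \<in> E \<rightarrow>\<^sub>E C \<Longrightarrow> box (intermediate A E sim) i f \<in> E \<rightarrow>\<^sub>E C"
  by (simp add: boxI M_c i)


abbreviation "I \<equiv> intermediate A E sim"

lemma img_const: "S \<noteq> {} \<Longrightarrow> (\<And>x. x \<in> S \<Longrightarrow> g x = c) \<Longrightarrow> g ` S = {c}"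
  by auto

lemma ax_mono: "f \<in> E \<rightarrow>\<^sub>E C \<Longrightarrow> g \<in> E \<rightarrow>\<^sub>E C \<Longrightarrow> hle I f g \<Longrightarrow>
   hle I (dia I i f) (dia I i g) \<and> hle I (box I i f) (box I i g)"
proof -
  assume f: "f \<in> E \<rightarrow>\<^sub>E C" and g: "g \<in> E \<rightarrow>\<^sub>E C" and fg: "hle I f g"
  have pw: "\<And>e. e \<in> E \<Longrightarrow> f e \<sqsubseteq> g e" using fg f g by (simp add: hleI)
  have m: "\<And>f e. f \<in> E \<rightarrow>\<^sub>E C \<Longrightarrow> e \<in> E \<Longrightarrow> f e \<in> C" by (rule PiE_mem)
  have cE: "\<And>e e'. e' \<in> cls i e \<Longrightarrow> e' \<in> E" using cls_sub by blast
  have 1: "hle I (dia I i f) (dia I i g)"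
    unfolding hleI[OF diaI_c[OF f] diaI_c[OF g]]
  proof
    fix e assume e: "e \<in> E"
    have "hlub A (f ` cls i e) \<sqsubseteq> hlub A (g ` cls i e)"
      by (rule J_least[OF f e J_c[OF g e]])
         (meson cE J_c J_ub e f g le_trans m pw)
    then show "dia I i f e \<sqsubseteq> dia I i g e"
      using e dia_mono[OF i] J_c f g by (simp add: diaI)
  qed
  have 2: "hle I (box I i f) (box I i g)"
    unfolding hleI[OF boxI_c[OF f] boxI_c[OF g]]
  proof
    fix e assume e: "e \<in> E"
    have "hglb A (f ` cls i e) \<sqsubseteq> hglb A (g ` cls i e)"
      by (rule M_greatest[OF g e M_c[OF f e]])
         (meson cE M_c M_lb e f g le_trans m pw)
    then show "box I i f e \<sqsubseteq> box I i g e"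
      using e box_mono[OF i] M_c f g by (simp add: boxI)
  qed
  show ?thesis using 1 2 by blast
qed


lemma A1: "a \<in> C \<Longrightarrow> a \<sqsubseteq> dia A i a" using ax[OF i, of a a] by blast
lemma A2: "a \<in> C \<Longrightarrow> box A i a \<sqsubseteq> a" using ax[OF i, of a a] by blast
lemma A4: "a \<in> C \<Longrightarrow> b \<in> C \<Longrightarrow> box A i (im A a b) \<sqsubseteq> im A (box A i a) (box A i b)" using ax[OF i, of a b] by blast
lemma A5: "a \<in> C \<Longrightarrow> dia A i a \<sqsubseteq> box A i (dia A i a)" using ax[OF i, of a a] by blast
lemma A6: "a \<in> C \<Longrightarrow> dia A i (box A i a) \<sqsubseteq> box A i a" using ax[OF i, of a a] by blast
lemma A7: "a \<in> C \<Longrightarrow> b \<in> C \<Longrightarrow> box A i (im A a b) \<sqsubseteq> im A (dia A i a) (dia A i b)" using ax[OF i, of a b] by blast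
lemma dC: "a \<in> C \<Longrightarrow> dia A i a \<in> C" and bC: "a \<in> C \<Longrightarrow> box A i a \<in> C"
  using dia_c[OF i] box_c[OF i] by auto
lemma djn: "a \<in> C \<Longrightarrow> b \<in> C \<Longrightarrow> dia A i (jn A a b) = jn A (dia A i a) (dia A i b)"
  using dia_jn[OF i] by blast
lemma dmono: "a \<in> C \<Longrightarrow> b \<in> C \<Longrightarrow> a \<sqsubseteq> b \<Longrightarrow> dia A i a \<sqsubseteq> dia A i b" using dia_mono[OF i] by blast
lemma bmono: "a \<in> C \<Longrightarrow> b \<in> C \<Longrightarrow> a \<sqsubseteq> b \<Longrightarrow> box A i a \<sqsubseteq> box A i b" using box_mono[OF i] by blast

lemma mm: "f \<in> E \<rightarrow>\<^sub>E C \<Longrightarrow> e \<in> E \<Longrightarrow> f e \<in> C" by (rule PiE_mem)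
lemma cE: "e' \<in> cls i e \<Longrightarrow> e' \<in> E" using cls_sub by blast

lemma ax_ext: "f \<in> E \<rightarrow>\<^sub>E C \<Longrightarrow> hle I f (dia I i f)"
proof -
  assume f: "f \<in> E \<rightarrow>\<^sub>E C"
  show ?thesis unfolding hleI[OF f diaI_c[OF f]]
  proof
    fix e assume e: "e \<in> E"
    have fJ: "f e \<sqsubseteq> hlub A (f ` cls i e)" by (rule J_ub[OF f e cls_self[OF e]])
    show "f e \<sqsubseteq> dia I i f e"
      using e f le_trans[OF mm[OF f e] J_c[OF f e] dC[OF J_c[OF f e]] fJ A1[OF J_c[OF f e]]]
      by (simp add: diaI)
  qed
qed

lemma ax_ded: "f \<in> E \<rightarrow>\<^sub>E C \<Longrightarrow> hle I (box I i f) f"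
proof -
  assume f: "f \<in> E \<rightarrow>\<^sub>E C"
  show ?thesis unfolding hleI[OF boxI_c[OF f] f]
  proof
    fix e assume e: "e \<in> E"
    have Mf: "hglb A (f ` cls i e) \<sqsubseteq> f e" by (rule M_lb[OF f e cls_self[OF e]])
    show "box I i f e \<sqsubseteq> f e"
      using e f le_trans[OF bC[OF M_c[OF f e]] M_c[OF f e] mm[OF f e] A2[OF M_c[OF f e]] Mf]
      by (simp add: boxI)
  qed
qed

lemma ax_jn: "f \<in> E \<rightarrow>\<^sub>E C \<Longrightarrow> g \<in> E \<rightarrow>\<^sub>E C \<Longrightarrow>
   hle I (dia I i (jn I f g)) (jn I (dia I i f) (dia I i g))"
proof -
  assume f: "f \<in> E \<rightarrow>\<^sub>E C" and g: "g \<in> E \<rightarrow>\<^sub>E C"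
  have h: "jn I f g \<in> E \<rightarrow>\<^sub>E C" using f g by (rule I_closed)
  show ?thesis unfolding hleI[OF diaI_c[OF h] I_closed(2)[OF diaI_c[OF f] diaI_c[OF g]]]
  proof
    fix e assume e: "e \<in> E"
    have Jf: "hlub A (f ` cls i e) \<in> C" and Jg: "hlub A (g ` cls i e) \<in> C" using J_c f g e by auto
    have "hlub A (jn I f g ` cls i e) \<sqsubseteq> jn A (hlub A (f ` cls i e)) (hlub A (g ` cls i e))"
    proof (rule J_least[OF h e jn_c[OF Jf Jg]])
      fix e' assume e': "e' \<in> cls i e"
      have "jn A (f e') (g e') \<sqsubseteq> jn A (hlub A (f ` cls i e)) (hlub A (g ` cls i e))"
        by (rule jn_mono[OF mm[OF f cE[OF e']] mm[OF g cE[OF e']] Jf Jg J_ub[OF f e e'] J_ub[OF g e e']])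
      then show "jn I f g e' \<sqsubseteq> jn A (hlub A (f ` cls i e)) (hlub A (g ` cls i e))"
        using cE[OF e'] by (simp add: I_simps)
    qed
    then have "dia A i (hlub A (jn I f g ` cls i e)) \<sqsubseteq> jn A (dia A i (hlub A (f ` cls i e))) (dia A i (hlub A (g ` cls i e)))"
      using Jf Jg J_c[OF h e] by (simp add: djn[symmetric] dmono)
    moreover have "dia I i (jn I f g) e = dia A i (hlub A (jn I f g ` cls i e))"
      unfolding diaI[OF h] using e by (rule restrict_apply')
    moreover have "jn I (dia I i f) (dia I i g) e = jn A (dia A i (hlub A (f ` cls i e))) (dia A i (hlub A (g ` cls i e)))"
      using e by (simp add: diaI[OF f] diaI[OF g] I_simps(3))
    ultimately show "dia I i (jn I f g) e \<sqsubseteq> jn I (dia I i f) (dia I i g) e" by simp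
  qed
qed

lemma ax_imbox: "f \<in> E \<rightarrow>\<^sub>E C \<Longrightarrow> g \<in> E \<rightarrow>\<^sub>E C \<Longrightarrow>
   hle I (box I i (im I f g)) (im I (box I i f) (box I i g))"
proof -
  assume f: "f \<in> E \<rightarrow>\<^sub>E C" and g: "g \<in> E \<rightarrow>\<^sub>E C"
  have h: "im I f g \<in> E \<rightarrow>\<^sub>E C" using f g by (rule I_closed)
  show ?thesis unfolding hleI[OF boxI_c[OF h] I_closed(3)[OF boxI_c[OF f] boxI_c[OF g]]]
  proof
    fix e assume e: "e \<in> E"
    have Mf: "hglb A (f ` cls i e) \<in> C" and Mg: "hglb A (g ` cls i e) \<in> C" and Mh: "hglb A (im I f g ` cls i e) \<in> C"
      using M_c f g h e by auto
    have "mt A (hglb A (im I f g ` cls i e)) (hglb A (f ` cls i e)) \<sqsubseteq> hglb A (g ` cls i e)"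
    proof (rule M_greatest[OF g e mt_c[OF Mh Mf]])
      fix e' assume e': "e' \<in> cls i e"
      have e'E: "e' \<in> E" using cE[OF e'] .
      have "mt A (hglb A (im I f g ` cls i e)) (hglb A (f ` cls i e)) \<sqsubseteq> mt A (im I f g e') (f e')"
        by (rule mt_mono[OF Mh Mf mm[OF h e'E] mm[OF f e'E] M_lb[OF h e e'] M_lb[OF f e e']])
      also have "mt A (im I f g e') (f e') = mt A (im A (f e') (g e')) (f e')" using e'E by (simp add: I_simps(4))
      finally show "mt A (hglb A (im I f g ` cls i e)) (hglb A (f ` cls i e)) \<sqsubseteq> g e'"
        using mp[of "f e'" "g e'"] mm[OF f e'E] mm[OF g e'E] Mh Mf
        by (meson im_c le_trans mt_c)
    qed
    then have "hglb A (im I f g ` cls i e) \<sqsubseteq> im A (hglb A (f ` cls i e)) (hglb A (g ` cls i e))"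
      using resid Mh Mf Mg by blast
    then have "box A i (hglb A (im I f g ` cls i e)) \<sqsubseteq> im A (box A i (hglb A (f ` cls i e))) (box A i (hglb A (g ` cls i e)))"
      using Mh Mf Mg by (meson A4 bC bmono im_c le_trans)
    moreover have "box I i (im I f g) e = box A i (hglb A (im I f g ` cls i e))"
      unfolding boxI[OF h] using e by (rule restrict_apply')
    moreover have "im I (box I i f) (box I i g) e = im A (box A i (hglb A (f ` cls i e))) (box A i (hglb A (g ` cls i e)))"
      using e by (simp add: boxI[OF f] boxI[OF g] I_simps(4))
    ultimately show "box I i (im I f g) e \<sqsubseteq> im I (box I i f) (box I i g) e" by simp
  qed
qed


lemma cls_ne: "e \<in> E \<Longrightarrow> cls i e \<noteq> {}" using cls_self by blast

lemma dia_val: "f \<in> E \<rightarrow>\<^sub>E C \<Longrightarrow> e \<in> E \<Longrightarrow> dia I i f e = dia A i (hlub A (f ` cls i e))"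
  unfolding diaI by (rule restrict_apply')
lemma box_val: "f \<in> E \<rightarrow>\<^sub>E C \<Longrightarrow> e \<in> E \<Longrightarrow> box I i f e = box A i (hglb A (f ` cls i e))"
  unfolding boxI by (rule restrict_apply')

lemma dia_img: assumes f: "f \<in> E \<rightarrow>\<^sub>E C" and e: "e \<in> E" shows "dia I i f ` cls i e = {dia A i (hlub A (f ` cls i e))}"
proof (rule img_const[OF cls_ne[OF e]])
  fix e' assume e': "e' \<in> cls i e"
  show "dia I i f e' = dia A i (hlub A (f ` cls i e))"
    using dia_val[OF f cE[OF e']] cls_same[OF e e'] by simp
qed
lemma box_img: assumes f: "f \<in> E \<rightarrow>\<^sub>E C" and e: "e \<in> E" shows "box I i f ` cls i e = {box A i (hglb A (f ` cls i e))}"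
proof (rule img_const[OF cls_ne[OF e]])
  fix e' assume e': "e' \<in> cls i e"
  show "box I i f e' = box A i (hglb A (f ` cls i e))"
    using box_val[OF f cE[OF e']] cls_same[OF e e'] by simp
qed

lemma ax_5: "f \<in> E \<rightarrow>\<^sub>E C \<Longrightarrow> hle I (dia I i f) (box I i (dia I i f))"
proof -
  assume f: "f \<in> E \<rightarrow>\<^sub>E C"
  have d: "dia I i f \<in> E \<rightarrow>\<^sub>E C" by (rule diaI_c[OF f])
  show ?thesis unfolding hleI[OF d boxI_c[OF d]]
  proof
    fix e assume e: "e \<in> E"
    have J: "hlub A (f ` cls i e) \<in> C" by (rule J_c[OF f e])
    show "dia I i f e \<sqsubseteq> box I i (dia I i f) e"
      unfolding box_val[OF d e] dia_img[OF f e] hglb_single[OF dC[OF J]] dia_val[OF f e]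
      by (rule A5[OF J])
  qed
qed

lemma ax_6: "f \<in> E \<rightarrow>\<^sub>E C \<Longrightarrow> hle I (dia I i (box I i f)) (box I i f)"
proof -
  assume f: "f \<in> E \<rightarrow>\<^sub>E C"
  have d: "box I i f \<in> E \<rightarrow>\<^sub>E C" by (rule boxI_c[OF f])
  show ?thesis unfolding hleI[OF diaI_c[OF d] d]
  proof
    fix e assume e: "e \<in> E"
    have M: "hglb A (f ` cls i e) \<in> C" by (rule M_c[OF f e])
    show "dia I i (box I i f) e \<sqsubseteq> box I i f e"
      unfolding dia_val[OF d e] box_img[OF f e] hlub_single[OF bC[OF M]] box_val[OF f e]
      by (rule A6[OF M])
  qed
qed

lemma ax_7: "f \<in> E \<rightarrow>\<^sub>E C \<Longrightarrow> g \<in> E \<rightarrow>\<^sub>E C \<Longrightarrow>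
   hle I (box I i (im I f g)) (im I (dia I i f) (dia I i g))"
proof -
  assume f: "f \<in> E \<rightarrow>\<^sub>E C" and g: "g \<in> E \<rightarrow>\<^sub>E C"
  have h: "im I f g \<in> E \<rightarrow>\<^sub>E C" using f g by (rule I_closed)
  show ?thesis unfolding hleI[OF boxI_c[OF h] I_closed(3)[OF diaI_c[OF f] diaI_c[OF g]]]
  proof
    fix e assume e: "e \<in> E"
    have Jf: "hlub A (f ` cls i e) \<in> C" and Jg: "hlub A (g ` cls i e) \<in> C" and Mh: "hglb A (im I f g ` cls i e) \<in> C"
      using J_c M_c f g h e by auto
    have "hlub A (f ` cls i e) \<sqsubseteq> im A (hglb A (im I f g ` cls i e)) (hlub A (g ` cls i e))"
    proof (rule J_least[OF f e im_c[OF Mh Jg]])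
      fix e' assume e': "e' \<in> cls i e"
      have e'E: "e' \<in> E" using cE[OF e'] .
      have fe: "f e' \<in> C" and ge: "g e' \<in> C" using mm f g e'E by auto
      have "mt A (f e') (hglb A (im I f g ` cls i e)) \<sqsubseteq> mt A (f e') (im I f g e')"
        by (rule mt_mono[OF fe Mh fe mm[OF h e'E] le_refl[OF fe] M_lb[OF h e e']])
      also have "mt A (f e') (im I f g e') = mt A (im A (f e') (g e')) (f e')"
        using e'E fe ge by (simp add: I_simps(4) mt_comm)
      finally have 1: "mt A (f e') (hglb A (im I f g ` cls i e)) \<sqsubseteq> g e'"
        using mp[OF fe ge] fe ge Mh by (meson im_c le_trans mt_c)
      have "mt A (f e') (hglb A (im I f g ` cls i e)) \<sqsubseteq> hlub A (g ` cls i e)"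
        using le_trans[OF mt_c[OF fe Mh] ge Jg 1 J_ub[OF g e e']] .
      then show "f e' \<sqsubseteq> im A (hglb A (im I f g ` cls i e)) (hlub A (g ` cls i e))"
        using resid[OF fe Mh Jg] by blast
    qed
    then have "mt A (hlub A (f ` cls i e)) (hglb A (im I f g ` cls i e)) \<sqsubseteq> hlub A (g ` cls i e)"
      using resid[OF Jf Mh Jg] by blast
    then have "mt A (hglb A (im I f g ` cls i e)) (hlub A (f ` cls i e)) \<sqsubseteq> hlub A (g ` cls i e)"
      using mt_comm[OF Jf Mh] by simp
    then have "hglb A (im I f g ` cls i e) \<sqsubseteq> im A (hlub A (f ` cls i e)) (hlub A (g ` cls i e))"
      using resid[OF Mh Jf Jg] by blast
    then have "box A i (hglb A (im I f g ` cls i e)) \<sqsubseteq> im A (dia A i (hlub A (f ` cls i e))) (dia A i (hlub A (g ` cls i e)))"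
      using Mh Jf Jg le_trans[OF bC[OF Mh] bC[OF im_c[OF Jf Jg]] im_c[OF dC[OF Jf] dC[OF Jg]] bmono[OF Mh im_c[OF Jf Jg]] A7[OF Jf Jg]]
      by blast
    moreover have "box I i (im I f g) e = box A i (hglb A (im I f g ` cls i e))"
      by (rule box_val[OF h e])
    moreover have "im I (dia I i f) (dia I i g) e = im A (dia A i (hlub A (f ` cls i e))) (dia A i (hlub A (g ` cls i e)))"
      using e by (simp add: diaI[OF f] diaI[OF g] I_simps(4))
    ultimately show "box I i (im I f g) e \<sqsubseteq> im I (dia I i f) (dia I i g) e" by simp
  qed
qed

lemma ax_bt': "hle I (dia I i (bt I)) (bt I)"
proof -
  have b: "bt I \<in> E \<rightarrow>\<^sub>E C" by (rule I_closed)
  show ?thesis unfolding hleI[OF diaI_c[OF b] b]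
  proof
    fix e assume e: "e \<in> E"
    have "bt I ` cls i e = {bt A}"
      by (rule img_const[OF cls_ne[OF e]]) (use cE in \<open>auto simp: I_simps\<close>)
    then show "dia I i (bt I) e \<sqsubseteq> bt I e"
      unfolding dia_val[OF b e] using e ax_bt[OF i] by (simp add: hlub_single I_simps(5))
  qed
qed

lemma ax_tp': "hle I (tp I) (box I i (tp I))"
proof -
  have b: "tp I \<in> E \<rightarrow>\<^sub>E C" by (rule I_closed)
  show ?thesis unfolding hleI[OF b boxI_c[OF b]]
  proof
    fix e assume e: "e \<in> E"
    have "tp I ` cls i e = {tp A}"
      by (rule img_const[OF cls_ne[OF e]]) (use cE in \<open>auto simp: I_simps\<close>)
    then show "tp I e \<sqsubseteq> box I i (tp I) e"
      unfolding box_val[OF b e] using e ax_tp[OF i] by (simp add: hglb_single I_simps(6))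
  qed
qed

end

lemma monadic_I: "monadic_ha Ag I"
  unfolding monadic_ha_def I_simps(1)
  by (intro conjI ballI impI heyting_I diaI_c boxI_c ax_mono[THEN conjunct1] ax_mono[THEN conjunct2] ax_ext ax_ded ax_jn ax_imbox ax_5 ax_6 ax_7 ax_bt' ax_tp'; assumption)

lemma epi_eq: assumes i: "i \<in> Ag" and a: "a \<in> E \<rightarrow>\<^sub>E C"
  and ep: "\<And>x. x \<in> C \<Longrightarrow> jn A (dia A i x) (hneg A (dia A i x)) = tp A"
  shows "jn I (dia I i a) (hneg I (dia I i a)) = tp I"
proof -
  have pw: "jn A (dia I i a e) (im A (dia I i a e) (bt A)) = tp A" if e: "e \<in> E" for e
    using dia_val[OF i a e] ep[OF J_c[OF i a e]] by (simp add: hneg_def)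
  show ?thesis
    unfolding hneg_def I_simps(3) I_simps(4) I_simps(5) I_simps(6)
    by (intro restrict_ext) (simp add: pw)
qed

end

theorem proposition3:
  fixes Ag :: "'i set" and A :: "('i, 'a) mha" and E :: "'e set"
    and sim :: "'i \<Rightarrow> 'e \<Rightarrow> 'e \<Rightarrow> bool" and P :: "'i \<Rightarrow> 'e \<Rightarrow> real"
    and Phi :: "'a multiset" and pre :: "'a \<times> nat \<Rightarrow> 'e \<Rightarrow> real"
  assumes "epistemic_ha Ag A"
    and "prob_event_structure Ag A E sim P Phi pre"
  shows "epistemic_ha Ag (intermediate A E sim)"
proof -
  have m: "monadic_ha Ag A" and fc: "finite (carr A)"
    and ep: "\<forall>i\<in>Ag. \<forall>a\<in>carr A. jn A (dia A i a) (hneg A (dia A i a)) = tp A"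
    using assms(1) unfolding epistemic_ha_def by auto
  have fE: "finite E" and eqv: "\<forall>i\<in>Ag. equiv E {(x, y). x \<in> E \<and> y \<in> E \<and> sim i x y}"
    using assms(2) unfolding prob_event_structure_def by auto
  have h: "heyting_algebra A" using m unfolding monadic_ha_def by auto
  interpret MHAE A Ag E sim
    by unfold_locales (use h m fE eqv in auto)
  show ?thesis
    unfolding epistemic_ha_def
  proof (intro conjI ballI)
    show "monadic_ha Ag (intermediate A E sim)" by (rule monadic_I)
    show "finite (carr (intermediate A E sim))"
      unfolding I_simps(1) using fE fc by (intro finite_PiE) auto
  next
    fix i a assume i: "i \<in> Ag" and a: "a \<in> carr (intermediate A E sim)"
    show "jn (intermediate A E sim) (dia (intermediate A E sim) i a)
        (hneg (intermediate A E sim) (dia (intermediate A E sim) i a)) = tp (intermediate A E sim)"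
      using epi_eq[OF i] a ep i unfolding I_simps(1) by blast
  qed
qed

end
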